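(* Let $u\in\mathbb Z$, $\ell,d_1,\dots,d_\ell\in\mathbb N$ and $\phi(\tau,z)=\eta(\tau)^u\prod_{i=1}^\ell\vartheta(\tau,d_iz)$. Then, regarding $\phi$ and $\frac{\phi(2\tau,2z)}{\phi(\tau,z)}$ as formal series in $R(24)$, $$\nu_J\Bigl(\frac{\phi(2\tau,2z)}{\phi(\tau,z)}\Bigr)=\nu_J(\phi).$$
   Context: $q=e^{2\pi i\tau}$, $\zeta=e^{2\pi iz}$; $\eta(\tau)=q^{1/24}\prod_{n\ge1}(1-q^n)$ and $\vartheta(\tau,z)=q^{1/8}(\zeta^{1/2}-\zeta^{-1/2})\prod_{j\ge1}(1-q^j\zeta)(1-q^j\zeta^{-1})(1-q^j)$. With $v=\frac{u+3\ell}{24}$ and $k=\frac{\ell+u}2$ one has the product expansions $\phi=q^v\prod_{j}(1-q^j)^{2k}\prod_i(\zeta^{d_i/2}-\zeta^{-d_i/2})\prod_{i,j}(1-q^j\zeta^{d_i})(1-q^j\zeta^{-d_i})$ and $\frac{\phi(2\tau,2z)}{\phi(\tau,z)}=q^v\prod_{j}(1+q^j)^{2k}\prod_i(\zeta^{d_i/2}+\zeta^{-d_i/2})\prod_{i,j}(1+q^j\zeta^{d_i})(1+q^j\zeta^{-d_i})$, which are formal series in $R(24)$. Here $R(N)=\mathbb C[\zeta^{1/N},\zeta^{-1/N}]((q^{1/N}))$ is the ring of formal series $f=\sum_{n,r\in\frac1N\mathbb Z}c(n,r)q^n\zeta^r$ with finitely many $r$ for each $n$ and $n$ bounded below on $\operatorname{supp}(f)=\{(n,r):c(n,r)\neq0\}$.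 For $P\subseteq\mathbb R^2$, $\operatorname{conv}(P;\vec A)=\operatorname{conv}(P)+[0,\infty)\times\{0\}$ and $\nu_J(f)=\operatorname{Closure}_{\mathbb R^2}(\operatorname{conv}(\operatorname{supp}(f);\vec A))$. *)

theory Defs
  imports "HOL-Analysis.Analysis" "HOL-Computational_Algebra.Formal_Laurent_Series"
begin

text \<open>Formal series are modelled in the field K of Laurent series in Q = q^(1/24) whose
coefficients are Laurent series in W = zeta^(1/24).  The element
sum c(a,b) Q^a W^b corresponds to sum c(a,b) q^(a/24) zeta^(b/24); R(24) sits inside K.\<close>

type_synonym K = "complex fls fls"

definition Qv :: K where "Qv = fls_X"
definition Wv :: K where "Wv = fls_const fls_X"

definition is_infprod :: "(nat \<Rightarrow> K) \<Rightarrow> K \<Rightarrow> bool" where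
  "is_infprod f P \<longleftrightarrow>
     (\<forall>n::int. \<forall>\<^sub>F N in sequentially. fls_nth (\<Prod>j\<in>{1..N}. f j) n = fls_nth P n)"

definition infprod :: "(nat \<Rightarrow> K) \<Rightarrow> K" where
  "infprod f = (THE P. is_infprod f P)"

text \<open>eta and theta(tau, d z), written in terms of the variables X = q^(1/24), Y = zeta^(1/24);
substituting (X,Y) := (Qv,Wv) gives eta(tau), theta(tau,d z), and
(X,Y) := (Qv^2,Wv^2) gives eta(2 tau), theta(2 tau, 2 d z).\<close>
definition eta_at :: "K \<Rightarrow> K \<Rightarrow> K" where
  "eta_at X Y = X * infprod (\<lambda>n. 1 - X ^ (24 * n))"

definition theta_at :: "K \<Rightarrow> K \<Rightarrow> nat \<Rightarrow> K" where
  "theta_at X Y d = X ^ 3 * (Y powi (12 * int d) - Y powi (- 12 * int d)) *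
     infprod (\<lambda>j. (1 - X ^ (24 * j) * Y powi (24 * int d)) *
                  (1 - X ^ (24 * j) * Y powi (- 24 * int d)) * (1 - X ^ (24 * j)))"

definition phi_at :: "K \<Rightarrow> K \<Rightarrow> int \<Rightarrow> nat list \<Rightarrow> K" where
  "phi_at X Y u ds = eta_at X Y powi u * (\<Prod>d\<leftarrow>ds. theta_at X Y d)"

definition phi :: "int \<Rightarrow> nat list \<Rightarrow> K" where
  "phi u ds = phi_at Qv Wv u ds"

definition phi2 :: "int \<Rightarrow> nat list \<Rightarrow> K" where
  "phi2 u ds = phi_at (Qv ^ 2) (Wv ^ 2) u ds"

definition fsupp :: "K \<Rightarrow> (real \<times> real) set" where
  "fsupp f = {(real_of_int a / 24, real_of_int b / 24) | a b. fls_nth (fls_nth f a) b \<noteq> 0}"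

definition conv_A :: "(real \<times> real) set \<Rightarrow> (real \<times> real) set" where
  "conv_A P = {x + (t, 0) | x t. x \<in> convex hull P \<and> t \<ge> 0}"

definition nu_J :: "K \<Rightarrow> (real \<times> real) set" where
  "nu_J f = closure (conv_A (fsupp f))"

end

theory Submission
  imports Defs
begin
unbundle fps_syntax

definition fc :: "K \<Rightarrow> int \<times> int \<Rightarrow> complex" where
  "fc f p = fls_nth (fls_nth f (fst p)) (snd p)"

lemma fls_mult_nth_gen:
  fixes f g :: "'a::comm_ring_1 fls"
  assumes "finite A" "\<And>i. f $$ i * g $$ (n - i) \<noteq> 0 \<Longrightarrow> i \<in> A"
  shows "(f * g) $$ n = (\<Sum>i\<in>A. f $$ i * g $$ (n - i))"
proof -
  let ?B = "{fls_subdegree f..n - fls_subdegree g}"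
  have "(f * g) $$ n = (\<Sum>i\<in>?B. f $$ i * g $$ (n - i))"
    by (rule fls_times_nth(2))
  also have "\<dots> = (\<Sum>i\<in>?B \<inter> A. f $$ i * g $$ (n - i))"
    by (rule sum.mono_neutral_right) (use assms in auto)
  also have "\<dots> = (\<Sum>i\<in>A. f $$ i * g $$ (n - i))"
  proof (rule sum.mono_neutral_left)
    show "\<forall>i\<in>A - ?B \<inter> A. f $$ i * g $$ (n - i) = 0"
    proof
      fix i assume i: "i \<in> A - ?B \<inter> A"
      show "f $$ i * g $$ (n - i) = 0"
      proof (rule ccontr)
        assume "f $$ i * g $$ (n - i) \<noteq> 0"
        hence "f $$ i \<noteq> 0" "g $$ (n - i) \<noteq> 0" by auto
        hence "fls_subdegree f \<le> i" "fls_subdegree g \<le> n - i" by (auto intro: fls_subdegree_leI)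
        with i show False by auto
      qed
    qed
  qed (use assms in auto)
  finally show ?thesis .
qed

lemma fc_mult_gen:
  assumes "finite A" "\<And>y. fc f y * fc g (x - y) \<noteq> 0 \<Longrightarrow> y \<in> A"
  shows "fc (f * g) x = (\<Sum>y\<in>A. fc f y * fc g (x - y))"
proof -
  obtain x1 x2 where x: "x = (x1, x2)" by (cases x)
  let ?B1 = "{fls_subdegree f..x1 - fls_subdegree g}"
  let ?B2 = "\<lambda>i. {fls_subdegree (f $$ i)..x2 - fls_subdegree (g $$ (x1 - i))}"
  let ?T = "\<lambda>y. fc f y * fc g (x - y)"
  have "fc (f * g) x = ((\<Sum>i\<in>?B1. f $$ i * g $$ (x1 - i))) $$ x2"
    unfolding fc_def x by (simp add: fls_times_nth(2))
  also have "\<dots> = (\<Sum>i\<in>?B1. (f $$ i * g $$ (x1 - i)) $$ x2)"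
    by (rule fls_nth_sum)
  also have "\<dots> = (\<Sum>i\<in>?B1. \<Sum>j\<in>?B2 i. ?T (i, j))"
    unfolding fc_def x by (intro sum.cong refl) (simp add: fls_times_nth(2))
  also have "\<dots> = (\<Sum>y\<in>Sigma ?B1 ?B2. ?T y)"
    by (subst sum.Sigma) (auto simp: case_prod_unfold)
  also have "\<dots> = (\<Sum>y\<in>Sigma ?B1 ?B2 \<inter> A. ?T y)"
    by (rule sum.mono_neutral_right) (use assms in auto)
  also have "\<dots> = (\<Sum>y\<in>A. ?T y)"
  proof (rule sum.mono_neutral_left)
    show "\<forall>y\<in>A - Sigma ?B1 ?B2 \<inter> A. ?T y = 0"
    proof
      fix y assume y: "y \<in> A - Sigma ?B1 ?B2 \<inter> A"
      obtain i j where yij: "y = (i, j)" by (cases y)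
      show "?T y = 0"
      proof (rule ccontr)
        assume "?T y \<noteq> 0"
        hence nz: "f $$ i $$ j \<noteq> 0" "g $$ (x1 - i) $$ (x2 - j) \<noteq> 0"
          by (auto simp: fc_def x yij)
        hence "f $$ i \<noteq> 0" "g $$ (x1 - i) \<noteq> 0" by auto
        hence "fls_subdegree f \<le> i" "fls_subdegree g \<le> x1 - i" by (auto intro: fls_subdegree_leI)
        moreover have "fls_subdegree (f $$ i) \<le> j" "fls_subdegree (g $$ (x1 - i)) \<le> x2 - j"
          using nz by (auto intro: fls_subdegree_leI)
        ultimately show False using y yij by auto
      qed
    qed
  qed (use assms in auto)
  finally show ?thesis .
qed

lemma fc_mult_exists:
  assumes "fc (f * g) x \<noteq> 0"
  shows "\<exists>y. fc f y \<noteq> 0 \<and> fc g (x - y) \<noteq> 0"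
proof (rule ccontr)
  assume "\<not> ?thesis"
  hence "fc (f * g) x = (\<Sum>y\<in>{}. fc f y * fc g (x - y))"
    by (intro fc_mult_gen) auto
  with assms show False by simp
qed

definition val :: "real \<Rightarrow> int \<times> int \<Rightarrow> real" where
  "val l p = real_of_int (fst p) + l * real_of_int (snd p)"

lemma val_add: "val l (p + q) = val l p + val l q"
  by (simp add: val_def algebra_simps)

lemma val_diff: "val l (p - q) = val l p - val l q"
  by (simp add: val_def algebra_simps)

lemma val_inj:
  assumes "l \<notin> \<rat>" "val l p = val l q"
  shows "p = q"
proof (cases "snd p = snd q")
  case True
  with assms(2) show ?thesis by (simp add: val_def prod_eq_iff)
next
  case False
  from assms(2) have "l * (of_int (snd p) - of_int (snd q)) = of_int (fst q) - of_int (fst p)"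
    by (simp add: val_def algebra_simps)
  hence "l = (of_int (fst q) - of_int (fst p)) / (of_int (snd p) - of_int (snd q))"
    using False by (simp add: field_simps)
  also have "\<dots> \<in> \<rat>" by (intro Rats_divide Rats_diff) auto
  finally show ?thesis using assms(1) by simp
qed

definition init :: "real \<Rightarrow> K \<Rightarrow> int \<times> int \<Rightarrow> bool" where
  "init l f p \<longleftrightarrow> fc f p \<noteq> 0 \<and> (\<forall>y. fc f y \<noteq> 0 \<longrightarrow> val l p \<le> val l y)"

lemma init_mult:
  assumes l: "l \<notin> \<rat>" and f: "init l f p" and g: "init l g q"
  shows "init l (f * g) (p + q)" "fc (f * g) (p + q) = fc f p * fc g q"
proof -
  have "fc (f * g) (p + q) = (\<Sum>y\<in>{p}. fc f y * fc g (p + q - y))"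
  proof (rule fc_mult_gen)
    fix y assume "fc f y * fc g (p + q - y) \<noteq> 0"
    hence "fc f y \<noteq> 0" "fc g (p + q - y) \<noteq> 0" by auto
    hence "val l p \<le> val l y" "val l q \<le> val l (p + q - y)" using f g unfolding init_def by blast+
    hence "val l y = val l p" by (simp add: val_add val_diff)
    thus "y \<in> {p}" using val_inj[OF l] by auto
  qed auto
  thus eq: "fc (f * g) (p + q) = fc f p * fc g q" by simp
  show "init l (f * g) (p + q)"
    unfolding init_def
  proof safe
    show "fc (f * g) (p + q) = 0 \<Longrightarrow> False" using eq f g by (simp add: init_def)
  next
    fix y assume "fc (f * g) y \<noteq> 0"
    then obtain z where z: "fc f z \<noteq> 0" "fc g (y - z) \<noteq> 0" using fc_mult_exists by blast
    hence "val l p \<le> val l z" "val l q \<le> val l (y - z)" using f g unfolding init_def by blast+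
    thus "val l (p + q) \<le> val l y" by (simp add: val_add val_diff)
  qed
qed

definition mon :: "int \<times> int \<Rightarrow> K" where
  "mon p = Qv powi fst p * Wv powi snd p"

lemma Qv_nz: "Qv \<noteq> 0" by (simp add: Qv_def)
lemma Wv_nz: "Wv \<noteq> 0" by (simp add: Wv_def)

lemma Qv_powi: "Qv powi a = fls_shift (-a) 1"
  by (simp add: Qv_def)

lemma Wv_powi: "Wv powi b = fls_const (fls_shift (-b) (1::complex fls))"
  by (simp add: Wv_def flip: fls_const_power_int)

lemma mon_nth: "mon (a, b) $$ k = (if k = a then fls_shift (-b) 1 else 0)"
  by (simp add: mon_def Qv_powi Wv_powi)

lemma fc_mon: "fc (mon p) y = (if y = p then 1 else 0)"
  by (cases p, cases y) (auto simp: fc_def mon_nth)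

lemma mon_0: "mon (0, 0) = 1"
  by (simp add: mon_def)

lemma mon_mult: "mon p * mon q = mon (p + q)"
  by (cases p, cases q) (simp add: mon_def power_int_add Qv_nz Wv_nz mult_ac)

lemma Qv_pow: "Qv ^ k = mon (int k, 0)"
  by (simp add: mon_def)

lemma Qv2_pow: "(Qv ^ 2) ^ k = mon (2 * int k, 0)"
proof -
  have "(Qv^2)^k = Qv^(2*k)" by (simp add: power_mult)
  also have "\<dots> = mon (int (2*k), 0)" by (rule Qv_pow)
  finally show ?thesis by simp
qed

lemma Wv2_powi: "(Wv ^ 2) powi b = mon (0, 2 * b)"
proof -
  have "(Wv ^ 2) powi b = Wv powi (2 * b)"
    by (metis power_int_mult power_int_of_nat of_nat_numeral)
  thus ?thesis by (simp add: mon_def)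
qed

lemma mon_split: "mon (a, 0) * mon (0, b) = mon (a, b)"
  by (simp add: mon_mult)

lemma fc_add: "fc (f + g) y = fc f y + fc g y" by (simp add: fc_def)
lemma fc_uminus: "fc (- f) y = - fc f y" by (simp add: fc_def)
lemma fc_diff: "fc (f - g) y = fc f y - fc g y" by (simp add: fc_def)
lemma fc_one: "fc 1 y = (if y = 0 then 1 else 0)"
  using fc_mon[of "(0,0)" y] by (simp add: mon_0 zero_prod_def)
lemma fc_zero: "fc 0 y = 0" by (simp add: fc_def)

lemma fc_sgn: "s = 1 \<or> s = -1 \<Longrightarrow> fc (s * f) y = (if s = 1 then fc f y else - fc f y)"
  by (auto simp: fc_uminus)

lemma init_unique: "l \<notin> \<rat> \<Longrightarrow> init l f p \<Longrightarrow> init l f q \<Longrightarrow> p = q"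
  unfolding init_def by (meson antisym val_inj)

lemma init_mon: "init l (mon p) p"
  by (auto simp: init_def fc_mon split: if_splits)

lemma init_one: "init l 1 0"
  by (auto simp: init_def fc_one split: if_splits)

lemma init_binom:
  assumes l: "l \<notin> \<rat>" and m: "m1 \<noteq> m2" and s: "s = 1 \<or> s = -1"
  shows "init l (mon m1 + s * mon m2) (if val l m1 < val l m2 then m1 else m2)"
proof -
  have fcv: "fc (mon m1 + s * mon m2) y = (if y = m1 then 1 else 0) + (if s = 1 then 1 else -1) * (if y = m2 then 1 else 0)" for y
    using s by (auto simp: fc_add fc_sgn[OF s] fc_mon)
  have ne: "val l m1 \<noteq> val l m2" using val_inj[OF l] m by blast
  show ?thesis unfolding init_def fcv using m ne s
    by (auto split: if_splits)
qed

lemma init_binom1: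
  assumes l: "l \<notin> \<rat>" and m: "m \<noteq> 0" and s: "s = 1 \<or> s = -1"
  shows "init l (1 + s * mon m) (if val l m < 0 then m else 0)"
proof -
  have "init l (mon (0,0) + s * mon m) (if val l (0,0) < val l m then (0,0) else m)"
    using init_binom[OF l _ s, of "(0,0)" m] m by (auto simp: zero_prod_def)
  moreover have "val l m \<noteq> 0" using val_inj[OF l, of m 0] m by (auto simp: val_def)
  ultimately show ?thesis
    by (auto simp: val_def mon_0 zero_prod_def split: if_splits)
qed

lemma init_binom1_pos:
  assumes l: "l \<notin> \<rat>" and m: "m \<noteq> 0" and s: "s = 1 \<or> s = -1" and v: "val l m > 0"
  shows "init l (1 + s * mon m) 0" "fc (1 + s * mon m) 0 = 1"
proof -
  show "init l (1 + s * mon m) 0" using init_binom1[OF l m s] v by simp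
  show "fc (1 + s * mon m) 0 = 1" using m s by (auto simp: fc_add fc_one fc_sgn fc_mon)
qed

lemma init_prod_set:
  assumes l: "l \<notin> \<rat>"
  shows "finite S \<Longrightarrow> (\<forall>j\<in>S. init l (F j) (pt j)) \<Longrightarrow>
    init l (\<Prod>j\<in>S. F j) (\<Sum>j\<in>S. pt j) \<and> fc (\<Prod>j\<in>S. F j) (\<Sum>j\<in>S. pt j) = (\<Prod>j\<in>S. fc (F j) (pt j))"
proof (induction S rule: finite_induct)
  case empty
  then show ?case using init_one by (simp add: fc_one)
next
  case (insert x S)
  then show ?case using init_mult[OF l, of "F x" "pt x" "\<Prod>j\<in>S. F j" "\<Sum>j\<in>S. pt j"] by simp
qed

lemma init_prod_list:
  assumes l: "l \<notin> \<rat>"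
  shows "(\<forall>d\<in>set ds. init l (F d) (pt d)) \<Longrightarrow> init l (prod_list (map F ds)) (sum_list (map pt ds))"
proof (induction ds)
  case Nil
  then show ?case using init_one by simp
next
  case (Cons a ds)
  then show ?case using init_mult[OF l, of "F a" "pt a"] by simp
qed

definition low :: "int \<Rightarrow> 'a::zero fls \<Rightarrow> bool" where
  "low m G \<longleftrightarrow> (\<forall>k<m. G $$ k = 0)"

lemma low_mult:
  fixes A B :: "'a::comm_ring_1 fls"
  assumes "low m A" "low n B"
  shows "low (m + n) (A * B)"
proof (cases "A = 0 \<or> B = 0")
  case True
  then show ?thesis by (auto simp: low_def)
next
  case False
  hence "m \<le> fls_subdegree A" "n \<le> fls_subdegree B"
    using assms by (auto simp: low_def intro: fls_subdegree_geI)
  thus ?thesis by (auto simp: low_def intro!: fls_times_nth_eq0)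
qed

lemma low_add: "low m A \<Longrightarrow> low m B \<Longrightarrow> low m (A + B)" by (simp add: low_def)
lemma low_diff: "low m A \<Longrightarrow> low m B \<Longrightarrow> low m (A - B)" by (simp add: low_def)
lemma low_mono: "low m A \<Longrightarrow> n \<le> m \<Longrightarrow> low n A" by (simp add: low_def)
lemma low_one: "low 0 1" by (simp add: low_def)
lemma low_zero: "low m 0" by (simp add: low_def)

lemma low_1plus:
  fixes A B :: "'a::comm_ring_1 fls"
  assumes "0 \<le> m" "low m A" "low m B"
  shows "low m ((1 + A) * (1 + B) - 1)"
proof -
  have "(1 + A) * (1 + B) - 1 = A + B + A * B" by (simp add: algebra_simps)
  moreover have "low m (A * B)" using low_mult[OF assms(2,3)] assms(1) low_mono by fastforce
  ultimately show ?thesis using assms by (simp add: low_add)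
qed

lemma low_mono_term: "low m (s * mon (a, b))" if "m \<le> a" "s = 1 \<or> s = -1"
  using that by (auto simp: low_def mon_nth)

abbreviation pp :: "(nat \<Rightarrow> K) \<Rightarrow> nat \<Rightarrow> K" where
  "pp F N \<equiv> \<Prod>j\<in>{1..N}. F j"

lemma pp_Suc: "pp F (Suc N) = pp F N * F (Suc N)"
  by (simp add: prod.nat_ivl_Suc' mult.commute)

lemma pp_low1:
  assumes "\<forall>j\<ge>1. low (int j) (F j - 1)"
  shows "low 1 (pp F N - 1)"
proof (induction N)
  case 0
  then show ?case by (simp add: low_def)
next
  case (Suc N)
  have e: "pp F (Suc N) - 1 = pp F N * (F (Suc N) - 1) + (pp F N - 1)"
    by (simp add: pp_Suc algebra_simps)
  have "low 0 (pp F N)"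
    using low_add[OF low_mono[OF Suc.IH, of 0] low_one] by simp
  moreover have "low 1 (F (Suc N) - 1)"
  proof -
    have "low (int (Suc N)) (F (Suc N) - 1)" using assms by auto
    thus ?thesis by (rule low_mono) auto
  qed
  ultimately have "low 1 (pp F N * (F (Suc N) - 1))" using low_mult by fastforce
  thus ?case using e Suc.IH low_add by metis
qed

lemma pp_low0:
  assumes "\<forall>j\<ge>1. low (int j) (F j - 1)"
  shows "low 0 (pp F N)"
  using low_add[OF low_mono[OF pp_low1[OF assms, of N], of 0] low_one] by simp

lemma pp_stab:
  assumes "\<forall>j\<ge>1. low (int j) (F j - 1)"
  shows "M \<le> N \<Longrightarrow> low (int M + 1) (pp F N - pp F M)"
proof (induction N)
  case 0
  then show ?case by (simp add: low_def)
next
  case (Suc N)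
  show ?case
  proof (cases "M = Suc N")
    case True
    then show ?thesis by (simp add: low_def)
  next
    case False
    hence MN: "M \<le> N" using Suc.prems by auto
    have e: "pp F (Suc N) - pp F M = pp F N * (F (Suc N) - 1) + (pp F N - pp F M)"
      by (simp add: pp_Suc algebra_simps)
    have "low (int (Suc N)) (F (Suc N) - 1)" using assms by auto
    hence "low (int M + 1) (F (Suc N) - 1)" by (rule low_mono) (use MN in auto)
    hence "low (0 + (int M + 1)) (pp F N * (F (Suc N) - 1))"
      by (rule low_mult[OF pp_low0[OF assms]])
    thus ?thesis using e Suc.IH[OF MN] low_add by (metis add_0)
  qed
qed

lemma is_infprod_unique:
  assumes "is_infprod F P" "is_infprod F Q"
  shows "P = Q"
proof (rule fls_eqI)
  fix n
  have "\<forall>\<^sub>F N in sequentially. fls_nth (pp F N) n = fls_nth P n \<and> fls_nth (pp F N) n = fls_nth Q n"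
    using assms unfolding is_infprod_def by (intro eventually_conj) auto
  then obtain N where "fls_nth (pp F N) n = fls_nth P n \<and> fls_nth (pp F N) n = fls_nth Q n"
    by (auto simp: eventually_sequentially)
  thus "P $$ n = Q $$ n" by metis
qed

lemma infprod_eq: "is_infprod F P \<Longrightarrow> infprod F = P"
  unfolding infprod_def using is_infprod_unique by blast

lemma infprod_exists:
  assumes A: "\<forall>j\<ge>1. low (int j) (F j - 1)"
  shows "is_infprod F (infprod F)"
proof -
  define P where "P = Abs_fls (\<lambda>n. if n < 0 then 0 else pp F (nat n) $$ n)"
  have Pn: "P $$ n = (if n < 0 then 0 else pp F (nat n) $$ n)" for n
    unfolding P_def by (rule nth_Abs_fls_lower_bound[of 0]) auto
  have "is_infprod F P"
    unfolding is_infprod_def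
  proof
    fix n :: int
    show "\<forall>\<^sub>F N in sequentially. fls_nth (pp F N) n = fls_nth P n"
      unfolding eventually_sequentially
    proof (intro exI[of _ "nat n"] allI impI)
      fix N assume N: "nat n \<le> N"
      show "fls_nth (pp F N) n = fls_nth P n"
      proof (cases "n < 0")
        case True
        then show ?thesis using pp_low0[OF A, of N] by (simp add: Pn low_def)
      next
        case False
        have "low (int (nat n) + 1) (pp F N - pp F (nat n))" by (rule pp_stab[OF A N])
        hence "(pp F N - pp F (nat n)) $$ n = 0" unfolding low_def using False by auto
        then show ?thesis using False by (simp add: Pn)
      qed
    qed
  qed
  thus ?thesis using infprod_eq by simp
qed

lemma is_infprod_low:
  assumes "is_infprod F P" "\<forall>N. low m (pp F N - G)"
  shows "low m (P - G)"
  unfolding low_def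
proof (intro allI impI)
  fix k assume k: "k < m"
  obtain N where "fls_nth (pp F N) k = fls_nth P k"
    using assms(1) unfolding is_infprod_def eventually_sequentially by blast
  moreover have "(pp F N - G) $$ k = 0" using assms(2) k by (auto simp: low_def)
  ultimately show "(P - G) $$ k = 0" by simp
qed

lemma infprod_low1:
  assumes "\<forall>j\<ge>1. low (int j) (F j - 1)"
  shows "low 1 (infprod F - 1)"
  using is_infprod_low[OF infprod_exists[OF assms]] pp_low1[OF assms] by blast

lemma fls_mult_nth_low0:
  fixes X Y :: "'a::comm_ring_1 fls"
  assumes "low 0 X" "low 0 Y"
  shows "(X * Y) $$ n = (\<Sum>i\<in>{0..n}. X $$ i * Y $$ (n - i))"
proof (rule fls_mult_nth_gen)
  fix i assume "X $$ i * Y $$ (n - i) \<noteq> 0"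
  hence "X $$ i \<noteq> 0" "Y $$ (n - i) \<noteq> 0" by auto
  thus "i \<in> {0..n}" using assms unfolding low_def by force
qed auto

lemma infprod_mult:
  assumes F: "is_infprod F A" and G: "is_infprod G B"
    and lF: "\<forall>N. low 0 (pp F N)" and lG: "\<forall>N. low 0 (pp G N)"
  shows "is_infprod (\<lambda>j. F j * G j) (A * B)"
  unfolding is_infprod_def
proof
  fix n :: int
  have lA: "low 0 A" using is_infprod_low[OF F, of 0 0] lF by simp
  have lB: "low 0 B" using is_infprod_low[OF G, of 0 0] lG by simp
  have ev: "\<forall>\<^sub>F N in sequentially. \<forall>i\<in>{0..n}. fls_nth (pp F N) i = fls_nth A i \<and> fls_nth (pp G N) (n - i) = fls_nth B (n - i)"
    using F G unfolding is_infprod_def by (intro eventually_ball_finite ballI eventually_conj) auto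
  show "\<forall>\<^sub>F N in sequentially. fls_nth (\<Prod>j\<in>{1..N}. F j * G j) n = fls_nth (A * B) n"
    using ev
  proof (rule eventually_mono)
    fix N assume H: "\<forall>i\<in>{0..n}. fls_nth (pp F N) i = fls_nth A i \<and> fls_nth (pp G N) (n - i) = fls_nth B (n - i)"
    have "fls_nth (\<Prod>j\<in>{1..N}. F j * G j) n = (pp F N * pp G N) $$ n"
      by (simp add: prod.distrib)
    also have "\<dots> = (\<Sum>i\<in>{0..n}. pp F N $$ i * pp G N $$ (n - i))"
      by (rule fls_mult_nth_low0) (use lF lG in auto)
    also have "\<dots> = (\<Sum>i\<in>{0..n}. A $$ i * B $$ (n - i))"
      using H by (intro sum.cong) auto
    also have "\<dots> = (A * B) $$ n"
      by (rule fls_mult_nth_low0[symmetric]) (use lA lB in auto)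
    finally show "fls_nth (\<Prod>j\<in>{1..N}. F j * G j) n = fls_nth (A * B) n" .
  qed
qed

definition iota :: "complex fls \<Rightarrow> K" where
  "iota h = Abs_fls (\<lambda>n. fls_const (h $$ n))"

lemma iota_nth: "iota h $$ n = fls_const (h $$ n)"
  unfolding iota_def by (rule nth_Abs_fls_lower_bound[of "fls_subdegree h"]) auto

lemma iota_add: "iota (a + b) = iota a + iota b"
  by (rule fls_eqI) (simp add: iota_nth fls_plus_const)

lemma iota_uminus: "iota (- a) = - iota a"
  by (rule fls_eqI) (simp add: iota_nth)

lemma iota_diff: "iota (a - b) = iota a - iota b"
  by (rule fls_eqI) (simp add: iota_nth fls_minus_const)

lemma iota_1: "iota 1 = 1"
  by (rule fls_eqI) (simp add: iota_nth)

lemma iota_0: "iota 0 = 0"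
  by (rule fls_eqI) (simp add: iota_nth)

lemma fls_const_sum: "fls_const (\<Sum>i\<in>A. f i) = (\<Sum>i\<in>A. fls_const (f i))"
  by (induction A rule: infinite_finite_induct) (simp_all add: fls_plus_const[symmetric])

lemma iota_mult: "iota (a * b) = iota a * iota b"
proof (rule fls_eqI)
  fix n
  let ?A = "{fls_subdegree a..n - fls_subdegree b}"
  have "(iota a * iota b) $$ n = (\<Sum>i\<in>?A. iota a $$ i * iota b $$ (n - i))"
  proof (rule fls_mult_nth_gen)
    fix i assume "iota a $$ i * iota b $$ (n - i) \<noteq> 0"
    hence "a $$ i \<noteq> 0" "b $$ (n - i) \<noteq> 0" by (auto simp: iota_nth)
    hence "fls_subdegree a \<le> i" "fls_subdegree b \<le> n - i" by (auto intro: fls_subdegree_leI)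
    thus "i \<in> ?A" by auto
  qed auto
  also have "\<dots> = fls_const (\<Sum>i\<in>?A. a $$ i * b $$ (n - i))"
    by (simp add: fls_const_sum iota_nth fls_const_mult_const)
  also have "\<dots> = iota (a * b) $$ n"
    by (simp add: iota_nth fls_times_nth(2))
  finally show "iota (a * b) $$ n = (iota a * iota b) $$ n" by simp
qed

lemma iota_power: "iota (a ^ n) = iota a ^ n"
  by (induction n) (simp_all add: iota_1 iota_mult)

lemma iota_inverse: "iota (inverse a) = inverse (iota a)"
proof (cases "a = 0")
  case True
  then show ?thesis by (simp add: iota_0)
next
  case False
  have "iota a * iota (inverse a) = 1"
    using False by (simp flip: iota_mult add: iota_1)
  thus ?thesis by (metis inverse_unique)
qed

lemma iota_powi: "iota (a powi n) = iota a powi n"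
  by (simp add: power_int_def iota_power iota_inverse)

lemma iota_X: "iota fls_X = Qv"
  by (rule fls_eqI) (simp add: iota_nth Qv_def)

lemma iota_prod: "iota (\<Prod>j\<in>S. f j) = (\<Prod>j\<in>S. iota (f j))"
  by (induction S rule: infinite_finite_induct) (simp_all add: iota_1 iota_mult)

lemma fc_iota: "fc (iota h) (a, b) = (if b = 0 then h $$ a else 0)"
  by (simp add: fc_def iota_nth)

lemma init_iota:
  assumes "h \<noteq> 0"
  shows "init l (iota h) (fls_subdegree h, 0)"
  unfolding init_def
proof safe
  show "fc (iota h) (fls_subdegree h, 0) = 0 \<Longrightarrow> False" using assms by (simp add: fc_iota)
next
  fix a b assume "fc (iota h) (a, b) \<noteq> 0"
  hence "b = 0" "h $$ a \<noteq> 0" by (auto simp: fc_iota split: if_splits)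
  thus "val l (fls_subdegree h, 0) \<le> val l (a, b)"
    by (auto simp: val_def intro: fls_subdegree_leI)
qed

definition eta_gen :: "K \<Rightarrow> K" where
  "eta_gen s = Qv * infprod (\<lambda>n. 1 + s * mon (24 * int n, 0))"

lemma iota_pm: "s0 = 1 \<or> s0 = -1 \<Longrightarrow> iota s0 = 1 \<or> iota s0 = -1"
  by (auto simp: iota_1 iota_uminus)

lemma eta_low: "s = 1 \<or> s = -1 \<Longrightarrow> \<forall>j\<ge>1. low (int j) ((1 + s * mon (24 * int j, 0)) - 1)"
  by (auto intro!: low_mono_term)

lemma eta_gen_iota:
  assumes s0: "s0 = 1 \<or> s0 = -1"
  shows "\<exists>h. eta_gen (iota s0) = iota h \<and> h \<noteq> 0 \<and> fls_subdegree h = 1"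
proof -
  define F where "F = (\<lambda>n::nat. 1 + iota s0 * mon (24 * int n, 0))"
  define g where "g = (\<lambda>n::nat. 1 + s0 * fls_X ^ (24 * n))"
  have Fg: "F n = iota (g n)" for n
    by (simp add: F_def g_def iota_add iota_1 iota_mult iota_power iota_X Qv_pow)
  have low: "\<forall>j\<ge>1. low (int j) (F j - 1)"
    unfolding F_def by (rule eta_low[OF iota_pm[OF s0]])
  define G where "G = infprod F"
  have G: "is_infprod F G" unfolding G_def by (rule infprod_exists[OF low])
  have l1: "low 1 (G - 1)" unfolding G_def by (rule infprod_low1[OF low])
  have l0: "G $$ k = 0" if "k < 0" for k
    using l1 that by (auto simp: low_def)
  have G00: "G $$ 0 = 1" using l1 by (auto simp: low_def)
  have Gc: "G $$ k = fls_const (G $$ k $$ 0)" for k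
  proof -
    obtain N where "fls_nth (pp F N) k = fls_nth G k"
      using G unfolding is_infprod_def eventually_sequentially by blast
    moreover have "pp F N = iota (\<Prod>j\<in>{1..N}. g j)" by (simp add: Fg iota_prod)
    ultimately show ?thesis by (metis fls_const_nth iota_nth)
  qed
  define g0 where "g0 = Abs_fls (\<lambda>k. G $$ k $$ 0)"
  have g0n: "g0 $$ k = G $$ k $$ 0" for k
    unfolding g0_def by (rule nth_Abs_fls_lower_bound[of 0]) (simp add: l0)
  have Gi: "G = iota g0"
    by (rule fls_eqI) (metis Gc g0n iota_nth)
  have g00: "g0 $$ 0 = 1" by (simp add: g0n G00)
  have g0nz: "g0 \<noteq> 0" using g00 by auto
  have g0s: "fls_subdegree g0 = 0"
    by (rule fls_subdegree_eqI) (simp_all add: g00 g0n l0 G00)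
  have "eta_gen (iota s0) = iota (fls_X * g0)"
    by (simp add: eta_gen_def iota_mult iota_X Gi[symmetric] G_def F_def)
  moreover have "fls_X * g0 \<noteq> 0" using g0nz by simp
  moreover have "fls_subdegree (fls_X * g0) = 1" using g0nz g0s by simp
  ultimately show ?thesis by blast
qed

lemma init_eta_powi:
  assumes s0: "s0 = 1 \<or> s0 = -1"
  shows "init l (eta_gen (iota s0) powi u) (u, 0)"
proof -
  obtain h where h: "eta_gen (iota s0) = iota h" "h \<noteq> 0" "fls_subdegree h = 1"
    using eta_gen_iota[OF s0] by blast
  have "eta_gen (iota s0) powi u = iota (h powi u)" by (simp add: h iota_powi)
  moreover have "h powi u \<noteq> 0" using h by simp
  moreover have "fls_subdegree (h powi u) = u" using h by simp
  ultimately show ?thesis using init_iota[of "h powi u" l] h(3) by simp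
qed

definition fac :: "K \<Rightarrow> nat \<Rightarrow> nat \<Rightarrow> K" where
  "fac s d j = (1 + s * mon (24 * int j, 24 * int d)) * (1 + s * mon (24 * int j, - 24 * int d))
     * (1 + s * mon (24 * int j, 0))"

definition theta_gen :: "K \<Rightarrow> nat \<Rightarrow> K" where
  "theta_gen s d = mon (3, 0) * (mon (0, 12 * int d) + s * mon (0, - 12 * int d)) * infprod (fac s d)"

lemma low_fac:
  assumes s: "s = 1 \<or> s = -1"
  shows "\<forall>j\<ge>1. low (int j) (fac s d j - 1)"
proof (intro allI impI)
  fix j :: nat assume "j \<ge> 1"
  let ?A = "s * mon (24 * int j, 24 * int d)"
  let ?B = "s * mon (24 * int j, - 24 * int d)"
  let ?C = "s * mon (24 * int j, 0)"
  have a: "low (int j) ?A" "low (int j) ?B" "low (int j) ?C"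
    using s by (auto intro!: low_mono_term)
  have "low (int j) ((1 + ?A) * (1 + ?B) - 1)" by (rule low_1plus) (use a in auto)
  hence "low (int j) ((1 + ((1 + ?A) * (1 + ?B) - 1)) * (1 + ?C) - 1)"
    by (intro low_1plus) (use a in auto)
  thus "low (int j) (fac s d j - 1)" by (simp add: fac_def)
qed

definition bp0 :: "real \<Rightarrow> int \<times> int \<Rightarrow> int \<times> int" where
  "bp0 l m = (if val l m < 0 then m else 0)"

definition Jb :: "real \<Rightarrow> nat \<Rightarrow> nat" where
  "Jb l d = nat \<lceil>\<bar>l\<bar> * real d\<rceil>"

definition ptf :: "real \<Rightarrow> nat \<Rightarrow> nat \<Rightarrow> int \<times> int" where
  "ptf l d j = bp0 l (24 * int j, 24 * int d) + bp0 l (24 * int j, - 24 * int d) + bp0 l (24 * int j, 0)"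

definition thpt :: "real \<Rightarrow> nat \<Rightarrow> int \<times> int" where
  "thpt l d = (3, 0) + (if val l (0, 12 * int d) < val l (0, - 12 * int d) then (0, 12 * int d) else (0, - 12 * int d))
     + (\<Sum>j\<in>{1..Jb l d}. ptf l d j)"

lemma init_fac:
  assumes l: "l \<notin> \<rat>" and s: "s = 1 \<or> s = -1" and j: "j \<ge> 1"
  shows "init l (fac s d j) (ptf l d j)"
proof -
  have nz: "(24 * int j, b) \<noteq> 0" for b using j by (simp add: zero_prod_def)
  show ?thesis
    unfolding fac_def ptf_def bp0_def
    by (intro init_mult[OF l] init_binom1[OF l nz s])
qed

lemma init_fac_tail:
  assumes l: "l \<notin> \<rat>" and s: "s = 1 \<or> s = -1" and j: "j > Jb l d"
  shows "init l (fac s d j) 0 \<and> fc (fac s d j) 0 = 1"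
proof -
  have jr: "real j > \<bar>l\<bar> * real d" using j unfolding Jb_def by linarith
  have j1: "j \<ge> 1" using j by simp
  have nz: "(24 * int j, b) \<noteq> 0" for b using j1 by (simp add: zero_prod_def)
  have ab: "\<bar>l * real d\<bar> < real j" using jr by (simp add: abs_mult)
  have v1: "val l (24 * int j, 24 * int d) > 0" using ab by (simp add: val_def abs_less_iff)
  have v2: "val l (24 * int j, - 24 * int d) > 0" using ab by (simp add: val_def abs_less_iff)
  have v3: "val l (24 * int j, 0) > 0" using j1 by (simp add: val_def)
  note b1 = init_binom1_pos[OF l nz s v1] and b2 = init_binom1_pos[OF l nz s v2]
    and b3 = init_binom1_pos[OF l nz s v3]
  have m12: "init l ((1 + s * mon (24 * int j, 24 * int d)) * (1 + s * mon (24 * int j, - 24 * int d))) (0 + 0)"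
    "fc ((1 + s * mon (24 * int j, 24 * int d)) * (1 + s * mon (24 * int j, - 24 * int d))) (0 + 0) = 1"
    using init_mult[OF l b1(1) b2(1)] b1(2) b2(2) by auto
  show ?thesis
    using init_mult[OF l m12(1) b3(1)] m12(2) b3(2) by (simp add: fac_def)
qed

lemma init_infprod:
  assumes l: "l \<notin> \<rat>" and P: "is_infprod F P" and J: "init l (pp F J) p"
    and tail: "\<forall>j>J. init l (F j) 0 \<and> fc (F j) 0 = 1"
  shows "init l P p"
proof -
  have step: "init l (pp F N) p \<and> fc (pp F N) p = fc (pp F J) p" if "J \<le> N" for N
    using that
  proof (induction N rule: dec_induct)
    case base
    then show ?case using J by simp
  next
    case (step N)
    have t: "init l (F (Suc N)) 0" "fc (F (Suc N)) 0 = 1" using tail step by auto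
    show ?case using init_mult[OF l _ t(1), of "pp F N" p] step.IH t(2) by (simp add: pp_Suc)
  qed
  have ex: "\<exists>N\<ge>J. fc (pp F N) y = fc P y" for y
  proof -
    have "\<forall>\<^sub>F N in sequentially. fls_nth (pp F N) (fst y) = fls_nth P (fst y) \<and> J \<le> N"
      using P unfolding is_infprod_def by (intro eventually_conj eventually_ge_at_top) auto
    then obtain N where "fls_nth (pp F N) (fst y) = fls_nth P (fst y)" "J \<le> N"
      unfolding eventually_sequentially by blast
    thus ?thesis by (auto simp: fc_def)
  qed
  show ?thesis
    unfolding init_def
  proof safe
    assume "fc P p = 0"
    obtain N where "N \<ge> J" "fc (pp F N) p = fc P p" using ex by blast
    with step[of N] \<open>fc P p = 0\<close> J show False by (simp add: init_def)
  next
    fix y assume "fc P y \<noteq> 0"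
    obtain N where N: "N \<ge> J" "fc (pp F N) y = fc P y" using ex by blast
    with step[of N] \<open>fc P y \<noteq> 0\<close> show "val l p \<le> val l y" unfolding init_def by metis
  qed
qed

lemma init_theta_gen:
  assumes l: "l \<notin> \<rat>" and s: "s = 1 \<or> s = -1" and d: "d \<ge> 1"
  shows "init l (theta_gen s d) (thpt l d)"
proof -
  have A: "init l (mon (3, 0)) (3, 0)" by (rule init_mon)
  have ne: "(0::int, 12 * int d) \<noteq> (0, - 12 * int d)" using d by simp
  have B: "init l (mon (0, 12 * int d) + s * mon (0, - 12 * int d))
      (if val l (0, 12 * int d) < val l (0, - 12 * int d) then (0, 12 * int d) else (0, - 12 * int d))"
    by (rule init_binom[OF l ne s])
  have pp: "init l (pp (fac s d) (Jb l d)) (\<Sum>j\<in>{1..Jb l d}. ptf l d j)"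
    using init_prod_set[OF l, of "{1..Jb l d}" "fac s d" "ptf l d"] init_fac[OF l s] by auto
  have C: "init l (infprod (fac s d)) (\<Sum>j\<in>{1..Jb l d}. ptf l d j)"
    by (rule init_infprod[OF l infprod_exists[OF low_fac[OF s]] pp])
       (use init_fac_tail[OF l s] in auto)
  show ?thesis
    unfolding theta_gen_def thpt_def by (intro init_mult[OF l] A B C)
qed

lemma infprod_mult_eq:
  assumes "\<forall>j\<ge>1. low (int j) (F j - 1)" "\<forall>j\<ge>1. low (int j) (G j - 1)"
  shows "infprod F * infprod G = infprod (\<lambda>j. F j * G j)"
  using infprod_eq[OF infprod_mult[OF infprod_exists[OF assms(1)] infprod_exists[OF assms(2)]]]
    pp_low0[OF assms(1)] pp_low0[OF assms(2)] by simp

lemma Wv_powi_mon: "Wv powi b = mon (0, b)"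
  by (simp add: mon_def)

lemma QW_mon: "Qv ^ k * Wv powi b = mon (int k, b)"
  by (simp add: Qv_pow Wv_powi_mon mon_split)

lemma QW2_mon: "(Qv ^ 2) ^ k * (Wv ^ 2) powi b = mon (2 * int k, 2 * b)"
  by (simp add: Qv2_pow Wv2_powi mon_split)

lemma theta_at_1: "theta_at Qv Wv d = theta_gen (-1) d"
  unfolding theta_at_def theta_gen_def fac_def
  by (simp add: QW_mon Wv_powi_mon Qv_pow mon_split)

lemma eta_at_1: "eta_at Qv Wv = eta_gen (-1)"
  unfolding eta_at_def eta_gen_def
  by (simp add: Qv_pow)

lemma sq_mon: "(1 - mon m) * (1 + mon m) = 1 - mon (m + m)"
  by (simp add: algebra_simps mon_mult[symmetric])

lemma theta_at_2: "theta_at (Qv ^ 2) (Wv ^ 2) d = theta_gen (-1) d * theta_gen 1 d"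
proof -
  have I: "infprod (fac (-1) d) * infprod (fac 1 d) = infprod (\<lambda>j. fac (-1) d j * fac 1 d j)"
    by (rule infprod_mult_eq[OF low_fac low_fac]) auto
  have F: "(\<lambda>j. fac (-1) d j * fac 1 d j) = (\<lambda>j. (1 - (Qv ^ 2) ^ (24 * j) * (Wv ^ 2) powi (24 * int d)) *
                  (1 - (Qv ^ 2) ^ (24 * j) * (Wv ^ 2) powi (- 24 * int d)) * (1 - (Qv ^ 2) ^ (24 * j)))"
  proof
    fix j
    have r1: "(Qv ^ 2) ^ (24 * j) * (Wv ^ 2) powi (24 * int d) = mon ((24 * int j, 24 * int d) + (24 * int j, 24 * int d))"
      using QW2_mon[of "24 * j" "24 * int d"] by simp
    have r2: "(Qv ^ 2) ^ (24 * j) * (Wv ^ 2) powi (- 24 * int d) = mon ((24 * int j, - 24 * int d) + (24 * int j, - 24 * int d))"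
      using QW2_mon[of "24 * j" "- 24 * int d"] by simp
    have r3: "(Qv ^ 2) ^ (24 * j) = mon ((24 * int j, 0) + (24 * int j, 0))"
      using Qv2_pow[of "24 * j"] by simp
    have ab: "(1 + -1 * a) * (1 + -1 * b) * (1 + -1 * c) * ((1 + 1 * a) * (1 + 1 * b) * (1 + 1 * c))
       = ((1 - a) * (1 + a)) * ((1 - b) * (1 + b)) * ((1 - c) * (1 + c))" for a b c :: K
      by (simp add: mult_ac)
    show "fac (-1) d j * fac 1 d j = (1 - (Qv ^ 2) ^ (24 * j) * (Wv ^ 2) powi (24 * int d)) *
                  (1 - (Qv ^ 2) ^ (24 * j) * (Wv ^ 2) powi (- 24 * int d)) * (1 - (Qv ^ 2) ^ (24 * j))"
      unfolding r1 r2 unfolding r3 fac_def ab sq_mon ..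
  qed
  have W: "(mon (0, 12 * int d) - mon (0, - 12 * int d)) * (mon (0, 12 * int d) + mon (0, - 12 * int d))
     = (Wv ^ 2) powi (12 * int d) - (Wv ^ 2) powi (- 12 * int d)"
    by (simp add: Wv2_powi algebra_simps mon_mult)
  have Q: "mon (3, 0) * mon (3, 0) = (Qv ^ 2) ^ 3"
    using Qv_pow[of 6] by (simp add: mon_mult flip: power_mult)
  have "theta_gen (-1) d * theta_gen 1 d = (mon (3, 0) * mon (3, 0)) *
      ((mon (0, 12 * int d) - mon (0, - 12 * int d)) * (mon (0, 12 * int d) + mon (0, - 12 * int d))) *
      (infprod (fac (-1) d) * infprod (fac 1 d))"
    by (simp add: theta_gen_def algebra_simps)
  also have "\<dots> = theta_at (Qv ^ 2) (Wv ^ 2) d"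
    unfolding I F W Q theta_at_def ..
  finally show ?thesis ..
qed

lemma eta_at_2: "eta_at (Qv ^ 2) (Wv ^ 2) = eta_gen (-1) * eta_gen 1"
proof -
  have I: "infprod (\<lambda>n. 1 + -1 * mon (24 * int n, 0)) * infprod (\<lambda>n. 1 + 1 * mon (24 * int n, 0))
     = infprod (\<lambda>j. (1 + -1 * mon (24 * int j, 0)) * (1 + 1 * mon (24 * int j, 0)))"
    by (rule infprod_mult_eq[OF eta_low eta_low]) auto
  have F: "(\<lambda>j. (1 + -1 * mon (24 * int j, 0)) * (1 + 1 * mon (24 * int j, 0))) = (\<lambda>n. 1 - (Qv ^ 2) ^ (24 * n))"
  proof
    fix j
    show "(1 + -1 * mon (24 * int j, 0)) * (1 + 1 * mon (24 * int j, 0)) = 1 - (Qv ^ 2) ^ (24 * j)"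
      using sq_mon[of "(24 * int j, 0)"] by (simp add: Qv2_pow)
  qed
  have "eta_gen (-1) * eta_gen 1 = Qv ^ 2 * (infprod (\<lambda>n. 1 + -1 * mon (24 * int n, 0)) * infprod (\<lambda>n. 1 + 1 * mon (24 * int n, 0)))"
    unfolding eta_gen_def by (simp add: algebra_simps power2_eq_square)
  also have "\<dots> = eta_at (Qv ^ 2) (Wv ^ 2)" unfolding I F eta_at_def ..
  finally show ?thesis ..
qed

definition Pq :: "int \<Rightarrow> nat list \<Rightarrow> K" where
  "Pq u ds = eta_gen 1 powi u * prod_list (map (theta_gen 1) ds)"

lemma prod_list_map_mult: fixes f g :: "nat \<Rightarrow> K" shows "prod_list (map (\<lambda>d. f d * g d) ds) = prod_list (map f ds) * prod_list (map g ds)"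
  by (induction ds) (simp_all add: mult_ac)

lemma phi_eq: "phi u ds = eta_gen (-1) powi u * prod_list (map (theta_gen (-1)) ds)"
  unfolding phi_def phi_at_def eta_at_1 theta_at_1 ..

lemma phi2_eq: "phi2 u ds = phi u ds * Pq u ds"
  unfolding phi2_def phi_at_def eta_at_2 theta_at_2 phi_eq Pq_def prod_list_map_mult power_int_mult_distrib
  by (simp add: mult_ac)

lemma init_phi:
  assumes l: "l \<notin> \<rat>" and ds: "\<forall>d\<in>set ds. d \<ge> 1"
  shows "init l (phi u ds) ((u, 0) + sum_list (map (thpt l) ds))"
    and "init l (Pq u ds) ((u, 0) + sum_list (map (thpt l) ds))"
proof -
  have e1: "init l (eta_gen (-1) powi u) (u, 0)"
    using init_eta_powi[of "-1" l u] by (simp add: iota_uminus iota_1)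
  have e2: "init l (eta_gen 1 powi u) (u, 0)"
    using init_eta_powi[of "1" l u] by (simp add: iota_1)
  have t1: "init l (prod_list (map (theta_gen (-1)) ds)) (sum_list (map (thpt l) ds))"
    by (rule init_prod_list[OF l]) (use ds init_theta_gen[OF l] in auto)
  have t2: "init l (prod_list (map (theta_gen 1) ds)) (sum_list (map (thpt l) ds))"
    by (rule init_prod_list[OF l]) (use ds init_theta_gen[OF l] in auto)
  show "init l (phi u ds) ((u, 0) + sum_list (map (thpt l) ds))"
    unfolding phi_eq by (rule init_mult[OF l e1 t1])
  show "init l (Pq u ds) ((u, 0) + sum_list (map (thpt l) ds))"
    unfolding Pq_def by (rule init_mult[OF l e2 t2])
qed

lemma irr_ex: "\<exists>x::real. x \<notin> \<rat> \<and> x > 0"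
proof -
  have "\<rat> \<noteq> (UNIV :: real set)"
  proof
    assume H: "\<rat> = (UNIV :: real set)"
    have "countable (UNIV :: real set)" by (subst H[symmetric]) (rule countable_rat)
    with uncountable_UNIV_real show False by blast
  qed
  then obtain x :: real where x: "x \<notin> \<rat>" by auto
  have "\<bar>x\<bar> \<notin> \<rat>"
  proof
    assume "\<bar>x\<bar> \<in> \<rat>"
    hence "x \<in> \<rat>"
    proof (cases "x \<ge> 0")
      case False
      hence "- x \<in> \<rat>" using \<open>\<bar>x\<bar> \<in> \<rat>\<close> by simp
      thus ?thesis by (simp only: Rats_minus_iff)
    qed simp
    with x show False by simp
  qed
  moreover have "\<bar>x\<bar> > 0" using x by (cases "x = 0") auto
  ultimately show ?thesis by blast
qed

lemma irr_comb:
  fixes x q r :: real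
  assumes "x \<notin> \<rat>" "q \<in> \<rat>" "r \<in> \<rat>" "r \<noteq> 0"
  shows "q + r * x \<notin> \<rat>"
proof
  assume "q + r * x \<in> \<rat>"
  hence "(q + r * x - q) / r \<in> \<rat>" using assms by (intro Rats_divide Rats_diff) auto
  hence "x \<in> \<rat>" using assms(4) by simp
  with assms(1) show False by simp
qed

lemma conv_A_convex: "convex (conv_A S)"
proof (rule convexI)
  fix x y :: "real \<times> real" and u v :: real
  assume x: "x \<in> conv_A S" and y: "y \<in> conv_A S" and uv: "0 \<le> u" "0 \<le> v" "u + v = 1"
  obtain x0 t where x0: "x = x0 + (t, 0)" "x0 \<in> convex hull S" "t \<ge> 0"
    using x unfolding conv_A_def by blast
  obtain y0 s where y0: "y = y0 + (s, 0)" "y0 \<in> convex hull S" "s \<ge> 0"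
    using y unfolding conv_A_def by blast
  have "u *\<^sub>R x + v *\<^sub>R y = (u *\<^sub>R x0 + v *\<^sub>R y0) + (u * t + v * s, 0)"
    by (simp add: x0(1) y0(1) prod_eq_iff algebra_simps)
  moreover have "u *\<^sub>R x0 + v *\<^sub>R y0 \<in> convex hull S"
    using convexD[OF convex_convex_hull x0(2) y0(2) uv] .
  moreover have "u * t + v * s \<ge> 0" using uv x0(3) y0(3) by simp
  ultimately show "u *\<^sub>R x + v *\<^sub>R y \<in> conv_A S" unfolding conv_A_def by blast
qed

lemma nuJ_half:
  assumes "\<forall>x\<in>S. c \<le> fst x + m * snd x" and "z \<in> closure (conv_A S)"
  shows "c \<le> fst z + m * snd z"
proof -
  let ?H = "{x. inner (1, m) x \<ge> c}"
  have inH: "x \<in> ?H \<longleftrightarrow> c \<le> fst x + m * snd x" for x :: "real \<times> real" by (cases x) simp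
  have "S \<subseteq> ?H" using assms(1) inH by auto
  hence "convex hull S \<subseteq> ?H" by (rule hull_minimal) (rule convex_halfspace_ge)
  hence "conv_A S \<subseteq> ?H" unfolding conv_A_def using inH by fastforce
  hence "closure (conv_A S) \<subseteq> ?H" by (rule closure_minimal) (rule closed_halfspace_ge)
  thus ?thesis using assms(2) inH by auto
qed

lemma in_nuJ:
  assumes "x \<in> S" "t \<ge> 0" shows "x + (t, 0) \<in> closure (conv_A S)"
proof -
  have "x \<in> convex hull S" using assms(1) by (rule hull_inc)
  hence "x + (t, 0) \<in> conv_A S" unfolding conv_A_def using assms(2) by blast
  thus ?thesis using closure_subset by blast
qed

lemma geo:
  fixes Sf Sg :: "(real \<times> real) set"
  assumes H: "\<And>\<mu>. \<mu> \<notin> \<rat> \<Longrightarrow> \<exists>c. (\<forall>x\<in>Sf. c \<le> fst x + \<mu> * snd x) \<and> (\<forall>x\<in>Sg. c \<le> fst x + \<mu> * snd x)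
       \<and> (\<exists>w\<in>Sg. fst w + \<mu> * snd w = c)"
    and A: "\<forall>x\<in>Sg. A \<le> fst x"
  shows "closure (conv_A Sf) \<subseteq> closure (conv_A Sg)"
proof
  fix z assume z: "z \<in> closure (conv_A Sf)"
  have K: "\<exists>w\<in>Sg. fst w + \<mu> * snd w \<le> fst z + \<mu> * snd z" if mu: "\<mu> \<notin> \<rat>" for \<mu>
  proof -
    obtain c where c: "\<forall>x\<in>Sf. c \<le> fst x + \<mu> * snd x" "\<exists>w\<in>Sg. fst w + \<mu> * snd w = c"
      using H[OF mu] by blast
    have "c \<le> fst z + \<mu> * snd z" by (rule nuJ_half[OF c(1) z])
    thus ?thesis using c(2) by auto
  qed
  have M: "\<exists>c. \<forall>x\<in>Sg. c \<le> fst x + \<mu> * snd x" if "\<mu> \<notin> \<rat>" for \<mu>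
    using H[OF that] by blast
  show "z \<in> closure (conv_A Sg)"
  proof (rule ccontr)
    assume nz: "z \<notin> closure (conv_A Sg)"
    have cv: "convex (closure (conv_A Sg))" by (rule convex_closure[OF conv_A_convex])
    obtain a b where ab: "inner a z < b" "\<forall>x\<in>closure (conv_A Sg). b < inner a x"
      using separating_hyperplane_closed_point[OF cv closed_closure nz] by blast
    obtain \<alpha> \<beta> where a: "a = (\<alpha>, \<beta>)" by (cases a)
    obtain z1 z2 where zz: "z = (z1, z2)" by (cases z)
    obtain i0 :: real where i0: "i0 \<notin> \<rat>" "i0 > 0" using irr_ex by blast
    obtain w0 where w0: "w0 \<in> Sg" using K[OF i0(1)] by blast
    have sepS: "b < \<alpha> * fst x + \<beta> * snd x" if "x \<in> Sg" for x
      using ab(2) in_nuJ[OF that, of 0] a by (cases x) auto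
    have za: "\<alpha> * z1 + \<beta> * z2 < b" using ab(1) a zz by simp
    have "\<alpha> \<ge> 0"
    proof (rule ccontr)
      assume "\<not> \<alpha> \<ge> 0"
      hence an: "\<alpha> < 0" by simp
      define t where "t = (\<alpha> * fst w0 + \<beta> * snd w0 - b) / (- \<alpha>)"
      have X: "0 < \<alpha> * fst w0 + \<beta> * snd w0 - b" using sepS[OF w0] by linarith
      have na: "0 < - \<alpha>" using an by linarith
      have t0: "t \<ge> 0" unfolding t_def using X na by (intro divide_nonneg_pos) linarith+
      have at: "(- \<alpha>) * t = \<alpha> * fst w0 + \<beta> * snd w0 - b" unfolding t_def using na by simp
      have "b < inner a (w0 + (t, 0))" using ab(2) in_nuJ[OF w0 t0] by blast
      moreover have "inner a (w0 + (t, 0)) = \<alpha> * fst w0 + \<beta> * snd w0 + \<alpha> * t"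
        by (cases w0) (simp add: a algebra_simps)
      ultimately show False using at by linarith
    qed
    show False
    proof (cases "\<alpha> = 0")
      case False
      hence ap: "\<alpha> > 0" using \<open>\<alpha> \<ge> 0\<close> by simp
      define lam where "lam = \<beta> / \<alpha>"
      define c where "c = b / \<alpha>"
      have Sgc: "c < fst x + lam * snd x" if xS: "x \<in> Sg" for x
      proof -
        have "fst x + lam * snd x = (\<alpha> * fst x + \<beta> * snd x) / \<alpha>" using ap by (simp add: lam_def field_simps)
        moreover have "b / \<alpha> < (\<alpha> * fst x + \<beta> * snd x) / \<alpha>" by (rule divide_strict_right_mono[OF sepS[OF xS] ap])
        ultimately show ?thesis by (simp add: c_def)
      qed
      have zc: "z1 + lam * z2 < c"
      proof -
        have "z1 + lam * z2 = (\<alpha> * z1 + \<beta> * z2) / \<alpha>" using ap by (simp add: lam_def field_simps)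
        moreover have "(\<alpha> * z1 + \<beta> * z2) / \<alpha> < b / \<alpha>" by (rule divide_strict_right_mono[OF za ap])
        ultimately show ?thesis by (simp add: c_def)
      qed
      show False
      proof (cases "lam \<in> \<rat>")
        case False
        obtain w where w: "w \<in> Sg" "fst w + lam * snd w \<le> fst z + lam * snd z" using K[OF False] by blast
        with Sgc[OF w(1)] zc zz show False by simp
      next
        case True
        have m2: "lam + 1 * i0 \<notin> \<rat>" by (rule irr_comb[OF i0(1) True]) auto
        obtain L where L: "\<forall>x\<in>Sg. L \<le> fst x + (lam + 1 * i0) * snd x" using M[OF m2] by blast
        define \<delta> where "\<delta> = c - (z1 + lam * z2)"
        have \<delta>: "\<delta> > 0" using zc by (simp add: \<delta>_def)
        define K0 where "K0 = \<bar>c + i0 * z2 - L\<bar>"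
        have K0: "K0 \<ge> 0" by (simp add: K0_def)
        have pos: "0 < min 1 (\<delta> / (K0 + 1))" using \<delta> K0 by simp
        obtain r where r: "r \<in> \<rat>" "0 < r" "r < min 1 (\<delta> / (K0 + 1))"
          using Rats_dense_in_real[OF pos] by blast
        have mu: "lam + r * i0 \<notin> \<rat>" by (rule irr_comb[OF i0(1) True r(1)]) (use r in auto)
        obtain w where w: "w \<in> Sg" "fst w + (lam + r * i0) * snd w \<le> z1 + (lam + r * i0) * z2"
          using K[OF mu] zz by auto
        have e: "fst w + (lam + r * i0) * snd w = (1 - r) * (fst w + lam * snd w) + r * (fst w + (lam + 1 * i0) * snd w)"
          by (simp add: algebra_simps)
        have "(1 - r) * c \<le> (1 - r) * (fst w + lam * snd w)"
          using Sgc[OF w(1)] r by (intro mult_left_mono) auto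
        moreover have "r * L \<le> r * (fst w + (lam + 1 * i0) * snd w)"
          using L w(1) r by (intro mult_left_mono) auto
        ultimately have ineq: "(1 - r) * c + r * L \<le> z1 + (lam + r * i0) * z2" using e w(2) by linarith
        have e1: "(1 - r) * c + r * L = c - r * (c - L)" by (simp add: algebra_simps)
        have e2: "z1 + (lam + r * i0) * z2 = (z1 + lam * z2) + r * (i0 * z2)" by (simp add: algebra_simps)
        have e3: "r * (c + i0 * z2 - L) = r * (c - L) + r * (i0 * z2)" by (simp add: algebra_simps)
        have "\<delta> \<le> r * (c + i0 * z2 - L)" using ineq e1 e2 e3 unfolding \<delta>_def by linarith
        also have "\<dots> \<le> r * K0" using r by (intro mult_left_mono) (auto simp: K0_def)
        also have "\<dots> < \<delta>"
        proof -
          have "r < \<delta> / (K0 + 1)" using r by simp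
          hence "r * (K0 + 1) < \<delta>" using K0 by (simp add: pos_less_divide_eq)
          moreover have "r * (K0 + 1) = r * K0 + r" by (simp add: algebra_simps)
          ultimately show ?thesis using r by linarith
        qed
        finally show False by simp
      qed
    next
      case True
      hence sepS2: "b < \<beta> * snd x" if "x \<in> Sg" for x using sepS[OF that] by simp
      have za2: "\<beta> * z2 < b" using za True by simp
      show False
      proof (cases "\<beta> > 0")
        case bp: True
        define c where "c = b / \<beta>"
        have xc: "c < snd x" if "x \<in> Sg" for x using sepS2[OF that] bp by (simp add: c_def field_simps)
        have zc: "z2 < c" using za2 bp by (simp add: c_def field_simps)
        have ip: "i0 * (c - z2) > 0" using i0 zc by simp
        obtain n :: nat where n: "\<bar>z1 - A\<bar> / (i0 * (c - z2)) < real n" using reals_Archimedean2 by blast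
        have "0 \<le> \<bar>z1 - A\<bar> / (i0 * (c - z2))" using ip by simp
        hence npos: "real n > 0" using n by linarith
        define \<mu> where "\<mu> = 0 + real n * i0"
        have mu: "\<mu> \<notin> \<rat>" unfolding \<mu>_def by (rule irr_comb[OF i0(1)]) (use npos in auto)
        have mup: "\<mu> > 0" using npos i0 by (simp add: \<mu>_def)
        obtain w where w: "w \<in> Sg" "fst w + \<mu> * snd w \<le> z1 + \<mu> * z2" using K[OF mu] zz by auto
        have "A + \<mu> * c \<le> fst w + \<mu> * snd w"
        proof -
          have "\<mu> * c \<le> \<mu> * snd w" using xc[OF w(1)] mup by (intro mult_left_mono) auto
          moreover have "A \<le> fst w" using A w(1) by auto
          ultimately show ?thesis by linarith
        qed
        moreover have "\<mu> * (c - z2) = \<mu> * c - \<mu> * z2" by (simp add: algebra_simps)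
        moreover have "z1 - A \<le> \<bar>z1 - A\<bar>" by simp
        ultimately have "\<mu> * (c - z2) \<le> \<bar>z1 - A\<bar>" using w(2) by linarith
        moreover have "\<bar>z1 - A\<bar> < real n * (i0 * (c - z2))" using n ip by (simp add: pos_divide_less_eq)
        moreover have "\<mu> * (c - z2) = real n * (i0 * (c - z2))" by (simp add: \<mu>_def)
        ultimately show False by linarith
      next
        case bn: False
        hence bn: "\<beta> < 0" using sepS2[OF w0] za2 by (cases "\<beta> = 0") auto
        define c where "c = b / \<beta>"
        have xc: "snd x < c" if "x \<in> Sg" for x using sepS2[OF that] bn by (simp add: c_def field_simps)
        have zc: "c < z2" using za2 bn by (simp add: c_def field_simps)
        have ip: "i0 * (z2 - c) > 0" using i0 zc by simp
        obtain n :: nat where n: "\<bar>z1 - A\<bar> / (i0 * (z2 - c)) < real n" using reals_Archimedean2 by blast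
        have "0 \<le> \<bar>z1 - A\<bar> / (i0 * (z2 - c))" using ip by simp
        hence npos: "real n > 0" using n by linarith
        define \<mu> where "\<mu> = 0 + (- real n) * i0"
        have mu: "\<mu> \<notin> \<rat>" unfolding \<mu>_def by (rule irr_comb[OF i0(1)]) (use npos in auto)
        have mun: "\<mu> < 0" using npos i0 by (simp add: \<mu>_def)
        obtain w where w: "w \<in> Sg" "fst w + \<mu> * snd w \<le> z1 + \<mu> * z2" using K[OF mu] zz by auto
        have "A + \<mu> * c \<le> fst w + \<mu> * snd w"
        proof -
          have "\<mu> * c \<le> \<mu> * snd w" using xc[OF w(1)] mun by (intro mult_left_mono_neg) auto
          moreover have "A \<le> fst w" using A w(1) by auto
          ultimately show ?thesis by linarith
        qed
        moreover have "(- \<mu>) * (z2 - c) = \<mu> * c - \<mu> * z2" by (simp add: algebra_simps)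
        moreover have "z1 - A \<le> \<bar>z1 - A\<bar>" by simp
        ultimately have "(- \<mu>) * (z2 - c) \<le> \<bar>z1 - A\<bar>" using w(2) by linarith
        moreover have "\<bar>z1 - A\<bar> < real n * (i0 * (z2 - c))" using n ip by (simp add: pos_divide_less_eq)
        moreover have "(- \<mu>) * (z2 - c) = real n * (i0 * (z2 - c))" by (simp add: \<mu>_def)
        ultimately show False by linarith
      qed
    qed
  qed
qed


lemma fsupp_init_le:
  assumes "init l h q" "x \<in> fsupp h"
  shows "val l q / 24 \<le> fst x + l * snd x"
proof -
  obtain a b where x: "x = (real_of_int a / 24, real_of_int b / 24)" "fls_nth (fls_nth h a) b \<noteq> 0"
    using assms(2) unfolding fsupp_def by blast
  have "fc h (a, b) \<noteq> 0" using x(2) by (simp add: fc_def)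
  hence "val l q \<le> val l (a, b)" using assms(1) unfolding init_def by blast
  hence "val l q / 24 \<le> val l (a, b) / 24" by simp
  also have "val l (a, b) / 24 = fst x + l * snd x" by (simp add: x(1) val_def field_simps)
  finally show ?thesis .
qed

lemma fsupp_init_pt:
  assumes "init l h q"
  shows "\<exists>w\<in>fsupp h. fst w + l * snd w = val l q / 24"
proof -
  have "fls_nth (fls_nth h (fst q)) (snd q) \<noteq> 0" using assms by (simp add: init_def fc_def)
  hence "(real_of_int (fst q) / 24, real_of_int (snd q) / 24) \<in> fsupp h" unfolding fsupp_def by blast
  moreover have "fst (real_of_int (fst q) / 24, real_of_int (snd q) / 24) + l * snd (real_of_int (fst q) / 24, real_of_int (snd q) / 24) = val l q / 24"
    by (simp add: val_def field_simps)
  ultimately show ?thesis by blast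
qed

lemma fsupp_lb:
  assumes "x \<in> fsupp h"
  shows "real_of_int (fls_subdegree h) / 24 \<le> fst x"
proof -
  obtain a b where x: "x = (real_of_int a / 24, real_of_int b / 24)" "fls_nth (fls_nth h a) b \<noteq> 0"
    using assms unfolding fsupp_def by blast
  hence "fls_nth h a \<noteq> 0" by auto
  hence "fls_subdegree h \<le> a" by (rule fls_subdegree_leI)
  thus ?thesis using x(1) by simp
qed

lemma nu_J_sub:
  assumes "\<And>l. l \<notin> \<rat> \<Longrightarrow> \<exists>p. init l f p \<and> init l g p"
  shows "nu_J f \<subseteq> nu_J g"
  unfolding nu_J_def
proof (rule geo[where A = "real_of_int (fls_subdegree g) / 24"])
  fix \<mu> :: real assume mu: "\<mu> \<notin> \<rat>"
  obtain p where p: "init \<mu> f p" "init \<mu> g p" using assms[OF mu] by blast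
  show "\<exists>c. (\<forall>x\<in>fsupp f. c \<le> fst x + \<mu> * snd x) \<and> (\<forall>x\<in>fsupp g. c \<le> fst x + \<mu> * snd x)
       \<and> (\<exists>w\<in>fsupp g. fst w + \<mu> * snd w = c)"
    using fsupp_init_le[OF p(1)] fsupp_init_le[OF p(2)] fsupp_init_pt[OF p(2)] by blast
qed (use fsupp_lb in blast)

theorem lemma6p3:
  fixes u :: int and ds :: "nat list"
  assumes "\<forall>d\<in>set ds. d \<ge> 1"
  shows "nu_J (phi2 u ds / phi u ds) = nu_J (phi u ds)"
proof -
  have I: "\<exists>p. init l (phi u ds) p \<and> init l (Pq u ds) p" if "l \<notin> \<rat>" for l
    using init_phi[OF that assms] by blast
  obtain i0 :: real where i0: "i0 \<notin> \<rat>" using irr_ex by blast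
  obtain p where "init i0 (phi u ds) p" using I[OF i0] by blast
  hence "phi u ds \<noteq> 0" by (auto simp: init_def fc_zero)
  hence "phi2 u ds / phi u ds = Pq u ds" by (simp add: phi2_eq)
  moreover have "nu_J (Pq u ds) \<subseteq> nu_J (phi u ds)" by (rule nu_J_sub) (use I in blast)
  moreover have "nu_J (phi u ds) \<subseteq> nu_J (Pq u ds)" by (rule nu_J_sub) (use I in blast)
  ultimately show ?thesis by auto
qed

end
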